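(* Let $G$ be an interval graph and consider an instance of \textsc{Requirement Induced Disjoint Paths} on $G$. Suppose some vertex $u$ of $G$ represents three terminals belonging to three different terminal pairs, and for each of these three terminals, the vertex representing its partner (the other terminal of its pair) is at distance at least $2$ from $u$ in $G$. Then the instance is a no-instance.
   Context: All graphs are finite, undirected, without loops or multiple edges. For a path $P=v_1\cdots v_r$, the vertices $v_1,v_r$ are its ends and $v_2,\ldots,v_{r-1}$ its inner vertices. An edge $v_iv_j$ with $i+1<j$ is an inner chord of $P$ if $v_i$ or $v_j$ is an inner vertex of $P$. Distinct paths $P_1,\ldots,P_\ell$ are mutually induced if (i) no $P_i$ has an inner chord; (ii) two distinct paths $P_i,P_j$ share only vertices that are ends of both paths; (iii) no inner vertex $u$ of some $P_i$ is adjacent to a vertex $v$ of some $P_j$ with $j\neq i$, unless $v$ is an end of both $P_i$ and $P_j$. \textsc{Requirement Induced Disjoint Paths}: the input is a graph $G$, $k$ terminal pairs $(s_1,t_1),\ldots,(s_k,t_k)$ and positive integers $r_1,\ldots,r_k$. Each terminal is placed on ("represented by") a vertex of $G$; several terminals may be represented by the same vertex, but $s_i$ and $t_i$ are represented by distinct vertices, and the unordered pairs of representing vertices are pairwise distinct for different $i$. The terminals $s_i$ and $t_i$ are called partners. The question is whether $G$ has $\ell=r_1+\cdots+r_k$ mutually induced paths such that, for each $i$, exactly $r_i$ of them join the vertex representing $s_i$ and the vertex representing $t_i$. An interval graph is a graph whose vertices can be assigned intervals of the real line so that two vertices are adjacent iff their intervals intersect. *)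

theory Defs
  imports Complex_Main
begin

definition graph :: "'a set \<Rightarrow> ('a \<Rightarrow> 'a \<Rightarrow> bool) \<Rightarrow> bool" where
  "graph V E \<longleftrightarrow> finite V \<and> (\<forall>u v. E u v \<longrightarrow> u \<in> V \<and> v \<in> V \<and> u \<noteq> v \<and> E v u)"

definition interval_graph :: "'a set \<Rightarrow> ('a \<Rightarrow> 'a \<Rightarrow> bool) \<Rightarrow> bool" where
  "interval_graph V E \<longleftrightarrow> graph V E \<and>
     (\<exists>l r :: 'a \<Rightarrow> real. (\<forall>v\<in>V. l v \<le> r v) \<and>
        (\<forall>u\<in>V. \<forall>v\<in>V. u \<noteq> v \<longrightarrow> (E u v \<longleftrightarrow> l u \<le> r v \<and> l v \<le> r u)))"

definition is_path :: "'a set \<Rightarrow> ('a \<Rightarrow> 'a \<Rightarrow> bool) \<Rightarrow> 'a list \<Rightarrow> bool" where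
  "is_path V E P \<longleftrightarrow> P \<noteq> [] \<and> distinct P \<and> set P \<subseteq> V \<and>
     (\<forall>i. Suc i < length P \<longrightarrow> E (P ! i) (P ! Suc i))"

definition ends :: "'a list \<Rightarrow> 'a set" where
  "ends P = {hd P, last P}"

definition inner :: "'a list \<Rightarrow> 'a set" where
  "inner P = {P ! i | i. 0 < i \<and> Suc i < length P}"

definition no_inner_chord :: "('a \<Rightarrow> 'a \<Rightarrow> bool) \<Rightarrow> 'a list \<Rightarrow> bool" where
  "no_inner_chord E P \<longleftrightarrow>
     (\<forall>i j. i + 1 < j \<and> j < length P \<and> (P ! i \<in> inner P \<or> P ! j \<in> inner P)
        \<longrightarrow> \<not> E (P ! i) (P ! j))"

text \<open>Paths as subgraphs: a path and its reversal are the same path.\<close>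
definition same_path :: "'a list \<Rightarrow> 'a list \<Rightarrow> bool" where
  "same_path P Q \<longleftrightarrow> P = Q \<or> P = rev Q"

definition mutually_induced :: "'a set \<Rightarrow> ('a \<Rightarrow> 'a \<Rightarrow> bool) \<Rightarrow> 'a list list \<Rightarrow> bool" where
  "mutually_induced V E Ps \<longleftrightarrow>
     (\<forall>P \<in> set Ps. is_path V E P \<and> no_inner_chord E P) \<and>
     (\<forall>i j. i < length Ps \<and> j < length Ps \<and> i \<noteq> j \<longrightarrow>
        \<not> same_path (Ps ! i) (Ps ! j) \<and>
        (\<forall>v \<in> set (Ps ! i) \<inter> set (Ps ! j). v \<in> ends (Ps ! i) \<and> v \<in> ends (Ps ! j)) \<and>
        (\<forall>u \<in> inner (Ps ! i). \<forall>v \<in> set (Ps ! j).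
            E u v \<longrightarrow> v \<in> ends (Ps ! i) \<and> v \<in> ends (Ps ! j)))"

definition RIDP_instance ::
  "'a set \<Rightarrow> ('a \<Rightarrow> 'a \<Rightarrow> bool) \<Rightarrow> nat \<Rightarrow> (nat \<Rightarrow> 'a) \<Rightarrow> (nat \<Rightarrow> 'a) \<Rightarrow> (nat \<Rightarrow> nat) \<Rightarrow> bool" where
  "RIDP_instance V E k s t r \<longleftrightarrow> graph V E \<and>
     (\<forall>i<k. s i \<in> V \<and> t i \<in> V \<and> s i \<noteq> t i \<and> 0 < r i) \<and>
     (\<forall>i<k. \<forall>j<k. i \<noteq> j \<longrightarrow> {s i, t i} \<noteq> {s j, t j})"

definition RIDP_yes ::
  "'a set \<Rightarrow> ('a \<Rightarrow> 'a \<Rightarrow> bool) \<Rightarrow> nat \<Rightarrow> (nat \<Rightarrow> 'a) \<Rightarrow> (nat \<Rightarrow> 'a) \<Rightarrow> (nat \<Rightarrow> nat) \<Rightarrow> bool" where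
  "RIDP_yes V E k s t r \<longleftrightarrow>
     (\<exists>Ps. length Ps = (\<Sum>i<k. r i) \<and> mutually_induced V E Ps \<and>
        (\<forall>i<k. length (filter (\<lambda>P. ends P = {s i, t i}) Ps) = r i))"

end

theory Submission
  imports Defs
begin

definition opath :: "'a set \<Rightarrow> ('a \<Rightarrow> 'a \<Rightarrow> bool) \<Rightarrow> 'a \<Rightarrow> 'a \<Rightarrow> 'a list \<Rightarrow> bool" where
  "opath V E u w Q \<longleftrightarrow> is_path V E Q \<and> hd Q = u \<and> last Q = w \<and> \<not> E u w \<and> u \<noteq> w"

lemma inner_sub: "inner P \<subseteq> set P"
  unfolding inner_def by auto

lemma opath_len:
  assumes "opath V E u w Q" shows "3 \<le> length Q"
proof -
  have p: "is_path V E Q" "hd Q = u" "last Q = w" "\<not> E u w" "u \<noteq> w"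
    using assms unfolding opath_def by auto
  have ne: "Q \<noteq> []" using p(1) unfolding is_path_def by auto
  have "length Q \<noteq> 1"
  proof
    assume "length Q = 1"
    then obtain x where "Q = [x]" by (cases Q) auto
    then show False using p by auto
  qed
  moreover have "length Q \<noteq> 2"
  proof
    assume "length Q = 2"
    then obtain x y where Q: "Q = [x, y]"
      by (metis One_nat_def Suc_1 length_0_conv length_Suc_conv)
    have "E (Q!0) (Q!Suc 0)" using p(1) \<open>length Q = 2\<close> unfolding is_path_def by auto
    then show False using p Q by auto
  qed
  ultimately show ?thesis using ne by (cases "length Q") auto
qed

lemma opath_x:
  assumes "opath V E u w Q"
  shows "Q!1 \<in> inner Q" "Q!1 \<notin> ends Q" "E u (Q!1)" "Q!1 \<in> set Q" "Q!1 \<in> V"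
proof -
  have p: "is_path V E Q" "hd Q = u" "last Q = w"
    using assms unfolding opath_def by auto
  have n: "3 \<le> length Q" using opath_len[OF assms] .
  show "Q!1 \<in> inner Q" unfolding inner_def using n by (intro CollectI exI[of _ 1]) auto
  have d: "distinct Q" using p(1) unfolding is_path_def by auto
  have h: "hd Q = Q!0" using n by (metis hd_conv_nth list.size(3) not_numeral_le_zero)
  have l: "last Q = Q!(length Q - 1)" using n by (metis last_conv_nth list.size(3) not_numeral_le_zero)
  have "Q!1 \<noteq> Q!0" using d n by (subst nth_eq_iff_index_eq) auto
  moreover have "Q!1 \<noteq> Q!(length Q - 1)" using d n by (simp add: nth_eq_iff_index_eq)
  ultimately show "Q!1 \<notin> ends Q" unfolding ends_def using h l by auto
  have "E (Q!0) (Q!Suc 0)" using p(1) n unfolding is_path_def by auto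
  then show "E u (Q!1)" using h p by simp
  show "Q!1 \<in> set Q" using n by simp
  then show "Q!1 \<in> V" using p(1) unfolding is_path_def by auto
qed

lemma seq_cross:
  fixes f g :: "nat \<Rightarrow> real"
  assumes "1 \<le> m" "g 1 < p" "p < f m" "p \<le> g m"
    and adj: "\<forall>j. 1 \<le> j \<and> j < m \<longrightarrow> f (Suc j) \<le> g j"
  shows "\<exists>j. 1 < j \<and> j < m \<and> f j \<le> p \<and> p \<le> g j"
proof -
  define j where "j = (LEAST j. 1 \<le> j \<and> p \<le> g j)"
  have ex: "1 \<le> m \<and> p \<le> g m" using assms by auto
  have j1: "1 \<le> j \<and> p \<le> g j" unfolding j_def by (rule LeastI[of _ m]) (rule ex)
  have jm: "j \<le> m" unfolding j_def by (rule Least_le) (rule ex)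
  have "j \<noteq> 1" using j1 assms(2) by auto
  then have j2: "2 \<le> j" using j1 by auto
  have "j - 1 < j" using j2 by auto
  then have "\<not> (1 \<le> j - 1 \<and> p \<le> g (j - 1))"
    unfolding j_def by (rule not_less_Least)
  then have "g (j - 1) < p" using j2 by auto
  moreover have "f (Suc (j - 1)) \<le> g (j - 1)" using adj[rule_format, of "j - 1"] j2 jm by linarith
  moreover have "Suc (j - 1) = j" using j2 by auto
  ultimately have fj: "f j < p" by auto
  have "j \<noteq> m" using fj assms(3) by auto
  then show ?thesis using fj j1 j2 jm by (intro exI[of _ j]) auto
qed

lemma no_middle:
  fixes l r :: "'a \<Rightarrow> real"
  assumes g: "graph V E"
    and rep: "\<forall>a\<in>V. \<forall>b\<in>V. a \<noteq> b \<longrightarrow> (E a b \<longleftrightarrow> l a \<le> r b \<and> l b \<le> r a)"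
    and lr: "\<forall>v\<in>V. l v \<le> r v"
    and op: "opath V E u w Q"
    and a: "a \<in> V" and c: "c \<in> V" and ua: "E u a" and uc: "E u c"
    and sep: "\<forall>y\<in>inner Q. \<not> E y a \<and> y \<noteq> a \<and> \<not> E y c \<and> y \<noteq> c"
  shows "\<not> (r a < l (Q!1) \<and> r (Q!1) < l c)"
proof
  assume mid: "r a < l (Q!1) \<and> r (Q!1) < l c"
  have p: "is_path V E Q" "hd Q = u" "last Q = w" "\<not> E u w" "u \<noteq> w"
    using op unfolding opath_def by auto
  have n: "3 \<le> length Q" using opath_len[OF op] .
  define m where "m = length Q - 1"
  have sV: "set Q \<subseteq> V" using p(1) unfolding is_path_def by auto
  have QV: "\<And>j. j < length Q \<Longrightarrow> Q!j \<in> V" using sV by auto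
  have u: "u \<in> V" using ua g unfolding graph_def by auto
  have wm: "Q!m = w" using p(3) n unfolding m_def by (metis last_conv_nth list.size(3) not_numeral_le_zero)
  have w: "w \<in> V" using QV[of m] wm n m_def by auto
  have uw: "r u < l w \<or> r w < l u" using rep u w p(4) p(5) by auto
  have ua': "l a \<le> r u \<and> l u \<le> r a" using rep u a ua g unfolding graph_def by metis
  have uc': "l c \<le> r u \<and> l u \<le> r c" using rep u c uc g unfolding graph_def by metis
  have adj: "\<And>j. j < m \<Longrightarrow> l (Q!Suc j) \<le> r (Q!j) \<and> l (Q!j) \<le> r (Q!Suc j)"
  proof -
    fix j assume "j < m"
    then have "E (Q!j) (Q!Suc j)" using p(1) unfolding is_path_def m_def by auto
    moreover then have "Q!j \<noteq> Q!Suc j" using g unfolding graph_def by auto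
    ultimately show "l (Q!Suc j) \<le> r (Q!j) \<and> l (Q!j) \<le> r (Q!Suc j)"
      using rep QV \<open>j < m\<close> m_def by (metis Suc_lessD less_diff_conv Suc_eq_plus1)
  qed
  have inn: "\<And>j. 0 < j \<Longrightarrow> j < m \<Longrightarrow> Q!j \<in> inner Q"
    unfolding inner_def m_def by auto
  have lrm: "l w \<le> r w" using lr w by auto
  from uw show False
  proof
    assume h: "r u < l w"
    have "\<exists>j. 1 < j \<and> j < m \<and> l (Q!j) \<le> l c \<and> l c \<le> r (Q!j)"
      apply (rule seq_cross[where f="\<lambda>j. l (Q!j)" and g="\<lambda>j. r (Q!j)"])
      using n m_def mid uc' h wm lrm adj by auto
    then obtain j where j: "1 < j" "j < m" "l (Q!j) \<le> l c" "l c \<le> r (Q!j)" by blast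
    have y: "Q!j \<in> inner Q" using inn j by auto
    have "Q!j \<in> V" using QV j m_def by auto
    moreover have "Q!j \<noteq> c" using sep y by auto
    moreover have "l c \<le> r c" using lr c by auto
    ultimately have "E (Q!j) c" using rep c j by auto
    then show False using sep y by auto
  next
    assume h: "r w < l u"
    have "\<exists>j. 1 < j \<and> j < m \<and> - r (Q!j) \<le> - r a \<and> - r a \<le> - l (Q!j)"
      apply (rule seq_cross[where f="\<lambda>j. - r (Q!j)" and g="\<lambda>j. - l (Q!j)"])
      using n m_def mid ua' h wm lrm adj by auto
    then obtain j where j: "1 < j" "j < m" "l (Q!j) \<le> r a" "r a \<le> r (Q!j)" by auto
    have y: "Q!j \<in> inner Q" using inn j by auto
    have "Q!j \<in> V" using QV j m_def by auto
    moreover have "Q!j \<noteq> a" using sep y by auto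
    moreover have "l a \<le> r a" using lr a by auto
    ultimately have "E (Q!j) a" using rep a j by auto
    then show False using sep y by auto
  qed
qed


definition sepP :: "('a \<Rightarrow> 'a \<Rightarrow> bool) \<Rightarrow> 'a list \<Rightarrow> 'a list \<Rightarrow> bool" where
  "sepP E Qa Qb \<longleftrightarrow> (\<forall>y\<in>inner Qa. \<forall>v\<in>set Qb. v \<notin> ends Qb \<longrightarrow> \<not> E y v \<and> y \<noteq> v)"

lemma mid_apply:
  fixes l r :: "'a \<Rightarrow> real"
  assumes g: "graph V E"
    and rep: "\<forall>a\<in>V. \<forall>b\<in>V. a \<noteq> b \<longrightarrow> (E a b \<longleftrightarrow> l a \<le> r b \<and> l b \<le> r a)"
    and lr: "\<forall>v\<in>V. l v \<le> r v"
    and oa: "opath V E u wa Qa" and ob: "opath V E u wb Qb" and oc: "opath V E u wc Qc"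
    and s1: "sepP E Qb Qa" and s2: "sepP E Qb Qc"
  shows "\<not> (r (Qa!1) < l (Qb!1) \<and> r (Qb!1) < l (Qc!1))"
proof (rule no_middle[OF g rep lr ob])
  show "Qa!1 \<in> V" "Qc!1 \<in> V" "E u (Qa!1)" "E u (Qc!1)" using opath_x oa oc by auto
  show "\<forall>y\<in>inner Qb. \<not> E y (Qa!1) \<and> y \<noteq> Qa!1 \<and> \<not> E y (Qc!1) \<and> y \<noteq> Qc!1"
    using s1 s2 opath_x[OF oa] opath_x[OF oc] unfolding sepP_def by blast
qed

lemma disj_apply:
  fixes l r :: "'a \<Rightarrow> real"
  assumes g: "graph V E"
    and rep: "\<forall>a\<in>V. \<forall>b\<in>V. a \<noteq> b \<longrightarrow> (E a b \<longleftrightarrow> l a \<le> r b \<and> l b \<le> r a)"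
    and oa: "opath V E u wa Qa" and ob: "opath V E u wb Qb"
    and s1: "sepP E Qa Qb"
  shows "r (Qa!1) < l (Qb!1) \<or> r (Qb!1) < l (Qa!1)"
proof -
  have "\<not> E (Qa!1) (Qb!1) \<and> Qa!1 \<noteq> Qb!1"
    using s1 opath_x[OF oa] opath_x[OF ob] unfolding sepP_def by blast
  then show ?thesis using rep opath_x(5)[OF oa] opath_x(5)[OF ob] by force
qed

lemma three:
  fixes l r :: "'a \<Rightarrow> real"
  assumes g: "graph V E"
    and rep: "\<forall>a\<in>V. \<forall>b\<in>V. a \<noteq> b \<longrightarrow> (E a b \<longleftrightarrow> l a \<le> r b \<and> l b \<le> r a)"
    and lr: "\<forall>v\<in>V. l v \<le> r v"
    and o1: "opath V E u w1 Q1" and o2: "opath V E u w2 Q2" and o3: "opath V E u w3 Q3"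
    and "sepP E Q1 Q2" "sepP E Q1 Q3" "sepP E Q2 Q1" "sepP E Q2 Q3" "sepP E Q3 Q1" "sepP E Q3 Q2"
  shows False
proof -
  note m = mid_apply[OF g rep lr]
  note d = disj_apply[OF g rep]
  have "\<not> (r (Q1!1) < l (Q2!1) \<and> r (Q2!1) < l (Q3!1))" by (rule m[OF o1 o2 o3]) fact+
  moreover have "\<not> (r (Q3!1) < l (Q2!1) \<and> r (Q2!1) < l (Q1!1))" by (rule m[OF o3 o2 o1]) fact+
  moreover have "\<not> (r (Q2!1) < l (Q1!1) \<and> r (Q1!1) < l (Q3!1))" by (rule m[OF o2 o1 o3]) fact+
  moreover have "\<not> (r (Q3!1) < l (Q1!1) \<and> r (Q1!1) < l (Q2!1))" by (rule m[OF o3 o1 o2]) fact+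
  moreover have "\<not> (r (Q1!1) < l (Q3!1) \<and> r (Q3!1) < l (Q2!1))" by (rule m[OF o1 o3 o2]) fact+
  moreover have "\<not> (r (Q2!1) < l (Q3!1) \<and> r (Q3!1) < l (Q1!1))" by (rule m[OF o2 o3 o1]) fact+
  moreover have "r (Q1!1) < l (Q2!1) \<or> r (Q2!1) < l (Q1!1)" by (rule d[OF o1 o2]) fact
  moreover have "r (Q1!1) < l (Q3!1) \<or> r (Q3!1) < l (Q1!1)" by (rule d[OF o1 o3]) fact
  moreover have "r (Q2!1) < l (Q3!1) \<or> r (Q3!1) < l (Q2!1)" by (rule d[OF o2 o3]) fact
  moreover have "l (Q1!1) \<le> r (Q1!1)" "l (Q2!1) \<le> r (Q2!1)" "l (Q3!1) \<le> r (Q3!1)"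
    using lr opath_x(5)[OF o1] opath_x(5)[OF o2] opath_x(5)[OF o3] by auto
  ultimately show False by linarith
qed


lemma is_path_rev:
  assumes g: "graph V E" and p: "is_path V E P" shows "is_path V E (rev P)"
  unfolding is_path_def
proof (intro conjI allI impI)
  show "rev P \<noteq> []" "distinct (rev P)" "set (rev P) \<subseteq> V" using p unfolding is_path_def by auto
  fix i assume i: "Suc i < length (rev P)"
  define n where "n = length P"
  have "E (P ! (n - Suc (Suc i))) (P ! Suc (n - Suc (Suc i)))"
    using p i unfolding is_path_def n_def by auto
  moreover have "Suc (n - Suc (Suc i)) = n - Suc i" using i n_def by auto
  ultimately have "E (P ! (n - Suc (Suc i))) (P ! (n - Suc i))" by simp
  then have "E (P ! (n - Suc i)) (P ! (n - Suc (Suc i)))" using g unfolding graph_def by blast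
  then show "E (rev P ! i) (rev P ! Suc i)" using i n_def by (simp add: rev_nth)
qed

lemma inner_rev: "inner (rev P) = inner P"
proof -
  have 1: "inner (rev Q) \<subseteq> inner Q" for Q :: "'b list"
  proof
    fix x assume "x \<in> inner (rev Q)"
    then obtain i where i: "0 < i" "Suc i < length Q" "x = rev Q ! i" unfolding inner_def by auto
    then have "x = Q ! (length Q - Suc i)" by (simp add: rev_nth)
    moreover have "0 < length Q - Suc i" "Suc (length Q - Suc i) < length Q" using i by auto
    ultimately show "x \<in> inner Q" unfolding inner_def by blast
  qed
  show ?thesis using 1[of P] 1[of "rev P"] by auto
qed

lemma ends_rev: "P \<noteq> [] \<Longrightarrow> ends (rev P) = ends P"
  unfolding ends_def by (simp add: hd_rev last_rev) blast

lemma get_path: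
  assumes g: "graph V E" and mi: "mutually_induced V E Ps"
    and cnt: "length (filter (\<lambda>P. ends P = {s, t}) Ps) = ri" and ri: "0 < ri"
    and h: "(s = u \<and> t \<noteq> u \<and> \<not> E u t) \<or> (t = u \<and> s \<noteq> u \<and> \<not> E u s)"
  shows "\<exists>a<length Ps. ends (Ps!a) = {s, t} \<and> (\<exists>w Q. opath V E u w Q \<and> set Q = set (Ps!a)
           \<and> inner Q = inner (Ps!a) \<and> ends Q = ends (Ps!a))"
proof -
  obtain w where w: "{s, t} = {u, w}" "u \<noteq> w" "\<not> E u w" using h by blast
  have "filter (\<lambda>P. ends P = {s, t}) Ps \<noteq> []" using cnt ri by auto
  then obtain P where P: "P \<in> set Ps" "ends P = {s, t}" by (auto simp: filter_empty_conv)
  then obtain a where a: "a < length Ps" "Ps ! a = P" by (auto simp: in_set_conv_nth)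
  have pp: "is_path V E P" using mi P unfolding mutually_induced_def by auto
  then have ne: "P \<noteq> []" unfolding is_path_def by auto
  have eP: "{hd P, last P} = {u, w}" using P w unfolding ends_def by auto
  have "\<exists>Q. opath V E u w Q \<and> set Q = set P \<and> inner Q = inner P \<and> ends Q = ends P"
  proof (cases "hd P = u")
    case True
    then have "last P = w" using eP w by (metis doubleton_eq_iff)
    then show ?thesis using True pp w unfolding opath_def by blast
  next
    case False
    then have "hd P = w" "last P = u" using eP by (auto simp: doubleton_eq_iff)
    then have "opath V E u w (rev P)" using is_path_rev[OF g pp] w ne
      unfolding opath_def by (simp add: hd_rev last_rev)
    moreover have "inner (rev P) = inner P" by (rule inner_rev)
    ultimately show ?thesis using ends_rev[OF ne] by (intro exI[of _ "rev P"]) simp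
  qed
  then show ?thesis using a P by blast
qed

lemma sep_mi:
  assumes mi: "mutually_induced V E Ps" and "a < length Ps" "b < length Ps" "a \<noteq> b"
    and "set Qa = set (Ps!a)" "inner Qa = inner (Ps!a)"
    and "set Qb = set (Ps!b)" "ends Qb = ends (Ps!b)"
  shows "sepP E Qa Qb"
  unfolding sepP_def
proof (intro ballI impI)
  fix y v assume y: "y \<in> inner Qa" and v: "v \<in> set Qb" and ve: "v \<notin> ends Qb"
  have c: "(\<forall>x \<in> set (Ps ! a) \<inter> set (Ps ! b). x \<in> ends (Ps ! a) \<and> x \<in> ends (Ps ! b)) \<and>
        (\<forall>x \<in> inner (Ps ! a). \<forall>z \<in> set (Ps ! b). E x z \<longrightarrow> z \<in> ends (Ps ! a) \<and> z \<in> ends (Ps ! b))"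
    using mi assms(2-4) unfolding mutually_induced_def by blast
  have ya: "y \<in> inner (Ps!a)" using y assms(6) by simp
  have vb: "v \<in> set (Ps!b)" using v assms(7) by simp
  have vn: "v \<notin> ends (Ps!b)" using ve assms(8) by simp
  have "y \<in> set (Ps!a)" using ya inner_sub[of "Ps!a"] by blast
  have "\<not> E y v" using c ya vb vn by blast
  moreover have "y \<noteq> v"
  proof
    assume "y = v"
    then have "v \<in> set (Ps ! a) \<inter> set (Ps ! b)" using \<open>y \<in> set (Ps!a)\<close> vb by simp
    then show False using c vn by blast
  qed
  ultimately show "\<not> E y v \<and> y \<noteq> v" by simp
qed

theorem mainTheorem6:
  fixes V :: "'a set" and E :: "'a \<Rightarrow> 'a \<Rightarrow> bool"
    and k :: nat and s t :: "nat \<Rightarrow> 'a" and r :: "nat \<Rightarrow> nat"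
    and u :: 'a and i1 i2 i3 :: nat
  assumes "interval_graph V E"
    and "RIDP_instance V E k s t r"
    and "i1 < k" "i2 < k" "i3 < k"
    and "i1 \<noteq> i2" "i1 \<noteq> i3" "i2 \<noteq> i3"
    and "\<forall>i \<in> {i1, i2, i3}.
           (s i = u \<and> t i \<noteq> u \<and> \<not> E u (t i)) \<or> (t i = u \<and> s i \<noteq> u \<and> \<not> E u (s i))"
  shows "\<not> RIDP_yes V E k s t r"
proof
  assume "RIDP_yes V E k s t r"
  then obtain Ps where mi: "mutually_induced V E Ps"
    and cnt: "\<forall>i<k. length (filter (\<lambda>P. ends P = {s i, t i}) Ps) = r i"
    unfolding RIDP_yes_def by blast
  have g: "graph V E" using assms(1) unfolding interval_graph_def by auto
  obtain l rr :: "'a \<Rightarrow> real" where lr: "\<forall>v\<in>V. l v \<le> rr v"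
    and rep: "\<forall>a\<in>V. \<forall>b\<in>V. a \<noteq> b \<longrightarrow> (E a b \<longleftrightarrow> l a \<le> rr b \<and> l b \<le> rr a)"
    using assms(1) unfolding interval_graph_def by blast
  have inst: "\<forall>i<k. s i \<in> V \<and> t i \<in> V \<and> s i \<noteq> t i \<and> 0 < r i"
    "\<forall>i<k. \<forall>j<k. i \<noteq> j \<longrightarrow> {s i, t i} \<noteq> {s j, t j}"
    using assms(2) unfolding RIDP_instance_def by auto
  have gp: "\<exists>a<length Ps. ends (Ps!a) = {s i, t i} \<and> (\<exists>w Q. opath V E u w Q \<and> set Q = set (Ps!a)
           \<and> inner Q = inner (Ps!a) \<and> ends Q = ends (Ps!a))" if "i \<in> {i1, i2, i3}" for i
  proof -
    have "i < k" using that assms(3-5) by auto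
    have c: "length (filter (\<lambda>P. ends P = {s i, t i}) Ps) = r i" using cnt \<open>i < k\<close> by blast
    have ri: "0 < r i" using inst(1) \<open>i < k\<close> by blast
    have h: "(s i = u \<and> t i \<noteq> u \<and> \<not> E u (t i)) \<or> (t i = u \<and> s i \<noteq> u \<and> \<not> E u (s i))"
      using assms(9) that by blast
    show ?thesis by (rule get_path[OF g mi c ri h])
  qed
  obtain a1 w1 Q1 where A1: "a1 < length Ps" "ends (Ps!a1) = {s i1, t i1}" "opath V E u w1 Q1"
    "set Q1 = set (Ps!a1)" "inner Q1 = inner (Ps!a1)" "ends Q1 = ends (Ps!a1)"
    using gp[of i1] by auto
  obtain a2 w2 Q2 where A2: "a2 < length Ps" "ends (Ps!a2) = {s i2, t i2}" "opath V E u w2 Q2"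
    "set Q2 = set (Ps!a2)" "inner Q2 = inner (Ps!a2)" "ends Q2 = ends (Ps!a2)"
    using gp[of i2] by auto
  obtain a3 w3 Q3 where A3: "a3 < length Ps" "ends (Ps!a3) = {s i3, t i3}" "opath V E u w3 Q3"
    "set Q3 = set (Ps!a3)" "inner Q3 = inner (Ps!a3)" "ends Q3 = ends (Ps!a3)"
    using gp[of i3] by auto
  have "a1 \<noteq> a2"
  proof
    assume "a1 = a2"
    then have "{s i1, t i1} = {s i2, t i2}" using A1(2) A2(2) by simp
    then show False using inst(2) assms(3,4,6) by blast
  qed
  moreover have "a1 \<noteq> a3"
  proof
    assume "a1 = a3"
    then have "{s i1, t i1} = {s i3, t i3}" using A1(2) A3(2) by simp
    then show False using inst(2) assms(3,5,7) by blast
  qed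
  moreover have "a2 \<noteq> a3"
  proof
    assume "a2 = a3"
    then have "{s i2, t i2} = {s i3, t i3}" using A2(2) A3(2) by simp
    then show False using inst(2) assms(4,5,8) by blast
  qed
  ultimately show False
    using three[OF g rep lr A1(3) A2(3) A3(3)
      sep_mi[OF mi A1(1) A2(1) _ A1(4) A1(5) A2(4) A2(6)]
      sep_mi[OF mi A1(1) A3(1) _ A1(4) A1(5) A3(4) A3(6)]
      sep_mi[OF mi A2(1) A1(1) _ A2(4) A2(5) A1(4) A1(6)]
      sep_mi[OF mi A2(1) A3(1) _ A2(4) A2(5) A3(4) A3(6)]
      sep_mi[OF mi A3(1) A1(1) _ A3(4) A3(5) A1(4) A1(6)]
      sep_mi[OF mi A3(1) A2(1) _ A3(4) A3(5) A2(4) A2(6)]]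
    by blast
qed

end
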